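(* Let $\mathcal{A}$, $H(\mathcal{A})$, $H(\mathcal{A}^* )$ be as in the context, and let $a,b'$ be non-negative integers. Define $$S=\sum_\alpha(-1)^{|\alpha|}e_\alpha\otimes e^\alpha\in H(\mathcal{A})^{\otimes2},\quad \tilde S=\sum_\alpha\tilde e_\alpha\otimes\tilde e^\alpha\in H(\mathcal{A}^* )^{\otimes2},$$ $$S'=\sum_\alpha(-1)^{(a+b'+1)|\alpha|}\tilde e_\alpha\otimes e^\alpha\in H(\mathcal{A}^* )\otimes H(\mathcal{A}),\quad S''=\sum_\alpha(-1)^{(a+b')|\alpha|}e_\alpha\otimes\tilde e^\alpha\in H(\mathcal{A})\otimes H(\mathcal{A}^* ).$$ Then, with leg-numbering notation $X_{ij}$ placing the two tensor factors of $X$ in positions $i,j$ of a triple tensor product (with the appropriate algebra $H(\mathcal{A})$ or $H(\mathcal{A}^* )$ in each position) and $1$ elsewhere, the following hold: $$S'_{12}S'_{13}S_{23}=S_{23}S'_{12},\qquad \tilde S_{12}S'_{23}=S'_{23}S'_{13}\tilde S_{12},$$ $$S_{12}S''_{13}S''_{23}=S''_{23}S_{12},\qquad S''_{12}\tilde S_{23}=\tilde S_{23}S''_{13}S''_{12},$$ $$S'_{12}\tilde S_{13}S''_{23}=S''_{23}S'_{12},\qquad S''_{12}S'_{23}=S'_{23}S_{13}S''_{12}.$$ Moreover $\tilde S$ satisfies $\tilde S_{12}\tilde S_{23}=\tilde S_{23}\tilde S_{13}\tilde S_{12}$.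
   Context: Graded tensor products: $(a_1\otimes b_1)(a_2\otimes b_2)=(-1)^{|b_1||a_2|}a_1a_2\otimes b_1b_2$. $\mathcal{A}$ is a $\mathbb{Z}_2$-graded Hopf algebra over $\mathbb{C}$ with homogeneous basis $e_\alpha$ of degree $|\alpha|$, $e_\alpha e_\beta=\sum_\gamma m^\gamma_{\alpha\beta}e_\gamma$, $\Delta(e_\alpha)=\sum\mu^{\beta\gamma}_\alpha e_\beta\otimes e_\gamma$; $\mathcal{A}^*$ is the dual Hopf algebra with dual basis $e^\alpha$. The Heisenberg double $H(\mathcal{A})$ is spanned by $e^\alpha\otimes e_\beta$ with product $(e^\alpha\otimes e_\beta)(e^\gamma\otimes e_\delta)=\sum(-1)^{|\beta||\gamma|+|\pi||\epsilon|+|\pi||\alpha|+|\epsilon|}m^\gamma_{\pi\epsilon}m^\tau_{\rho\delta}\mu^{\epsilon\rho}_\beta\mu^{\alpha\pi}_\sigma e^\sigma\otimes e_\tau$; write $e_\alpha=1\otimes e_\alpha$, $e^\alpha=e^\alpha\otimes1$. The Heisenberg double $H(\mathcal{A}^* )$ is spanned by $\tilde e_\alpha\otimes\tilde e^\beta$ with product $(\tilde e_\alpha\otimes\tilde e^\beta)(\tilde e_\gamma\otimes\tilde e^\delta)=\sum(-1)^{|\rho||\pi|+|\rho||\epsilon|+|\pi||\delta|}\mu^{\rho\epsilon}_\gamma\mu^{\pi\delta}_\tau m^\beta_{\epsilon\pi}m^\sigma_{\alpha\rho}\tilde e_\sigma\otimes\tilde e^\tau$; write $\tilde e_\alpha=\tilde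 e_\alpha\otimes1$, $\tilde e^\alpha=1\otimes\tilde e^\alpha$, of degree $|\alpha|$. In the six identities, the positions carry: first identity $H(\mathcal{A}^* ),H(\mathcal{A}),H(\mathcal{A})$; second $H(\mathcal{A}^* ),H(\mathcal{A}^* ),H(\mathcal{A})$; third $H(\mathcal{A}),H(\mathcal{A}),H(\mathcal{A}^* )$; fourth $H(\mathcal{A}),H(\mathcal{A}^* ),H(\mathcal{A}^* )$; fifth $H(\mathcal{A}^* ),H(\mathcal{A}),H(\mathcal{A}^* )$; sixth $H(\mathcal{A}),H(\mathcal{A}^* ),H(\mathcal{A})$. *)

theory Defs
  imports Complex_Main
begin

text \<open>A finite-dimensional Z2-graded Hopf algebra over the complex numbers, given by
structure constants with respect to a homogeneous basis indexed by a finite type 'i.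
Conventions:
  deg a          = degree |a| (0 or 1) of the basis element e_a
  m c a b        = m^c_{ab}, i.e. e_a e_b = sum_c m c a b e_c
  mu a b c       = mu_a^{bc}, i.e. Delta(e_a) = sum mu a b c e_b (x) e_c
  u a            = coefficient of e_a in the unit 1
  eps a          = counit of e_a
  s a b          = coefficient of e_b in the antipode S(e_a).
Delta is multiplicative for the graded tensor product
(a1 (x) b1)(a2 (x) b2) = (-1)^(|b1||a2|) a1a2 (x) b1b2.\<close>

definition graded_hopf ::
  "('i::finite \<Rightarrow> nat) \<Rightarrow> ('i \<Rightarrow> 'i \<Rightarrow> 'i \<Rightarrow> complex) \<Rightarrow> ('i \<Rightarrow> 'i \<Rightarrow> 'i \<Rightarrow> complex)
   \<Rightarrow> ('i \<Rightarrow> complex) \<Rightarrow> ('i \<Rightarrow> complex) \<Rightarrow> ('i \<Rightarrow> 'i \<Rightarrow> complex) \<Rightarrow> bool" where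
  "graded_hopf deg m mu u eps s \<longleftrightarrow>
    (\<forall>x. deg x < 2) \<and>
    (\<forall>c a b. m c a b \<noteq> 0 \<longrightarrow> deg c mod 2 = (deg a + deg b) mod 2) \<and>
    (\<forall>a b c. mu a b c \<noteq> 0 \<longrightarrow> deg a mod 2 = (deg b + deg c) mod 2) \<and>
    (\<forall>x. u x \<noteq> 0 \<longrightarrow> deg x = 0) \<and>
    (\<forall>x. eps x \<noteq> 0 \<longrightarrow> deg x = 0) \<and>
    (\<forall>a b. s a b \<noteq> 0 \<longrightarrow> deg a = deg b) \<and>
    (\<forall>a b c d. (\<Sum>k\<in>UNIV. m k a b * m d k c) = (\<Sum>k\<in>UNIV. m k b c * m d a k)) \<and>
    (\<forall>a c. (\<Sum>k\<in>UNIV. u k * m c k a) = (if a = c then 1 else 0) \<and>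
           (\<Sum>k\<in>UNIV. u k * m c a k) = (if a = c then 1 else 0)) \<and>
    (\<forall>a x y z. (\<Sum>k\<in>UNIV. mu a k z * mu k x y) = (\<Sum>k\<in>UNIV. mu a x k * mu k y z)) \<and>
    (\<forall>a b. (\<Sum>k\<in>UNIV. eps k * mu a k b) = (if a = b then 1 else 0) \<and>
           (\<Sum>k\<in>UNIV. eps k * mu a b k) = (if a = b then 1 else 0)) \<and>
    (\<forall>a b x y. (\<Sum>k\<in>UNIV. m k a b * mu k x y) =
        (\<Sum>b1\<in>UNIV. \<Sum>g1\<in>UNIV. \<Sum>b2\<in>UNIV. \<Sum>g2\<in>UNIV.
            (-1) ^ (deg g1 * deg b2) * mu a b1 g1 * mu b b2 g2 * m x b1 b2 * m y g1 g2)) \<and>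
    (\<forall>x y. (\<Sum>k\<in>UNIV. u k * mu k x y) = u x * u y) \<and>
    (\<forall>a b. (\<Sum>k\<in>UNIV. m k a b * eps k) = eps a * eps b) \<and>
    (\<Sum>k\<in>UNIV. u k * eps k) = 1 \<and>
    (\<forall>a x. (\<Sum>b\<in>UNIV. \<Sum>c\<in>UNIV. \<Sum>d\<in>UNIV. mu a b c * s b d * m x d c) = eps a * u x \<and>
           (\<Sum>b\<in>UNIV. \<Sum>c\<in>UNIV. \<Sum>d\<in>UNIV. mu a b c * s c d * m x b d) = eps a * u x)"

text \<open>Heisenberg double H(A): basis (si,ta) stands for e^si (x) e_ta.
HA_mult x y z = coefficient of basis element z in the product x y.\<close>

definition HA_mult ::
  "('i::finite \<Rightarrow> nat) \<Rightarrow> ('i \<Rightarrow> 'i \<Rightarrow> 'i \<Rightarrow> complex) \<Rightarrow> ('i \<Rightarrow> 'i \<Rightarrow> 'i \<Rightarrow> complex)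
   \<Rightarrow> 'i \<times> 'i \<Rightarrow> 'i \<times> 'i \<Rightarrow> 'i \<times> 'i \<Rightarrow> complex" where
  "HA_mult deg m mu x y z =
    (case x of (al, be) \<Rightarrow> case y of (ga, de) \<Rightarrow> case z of (si, ta) \<Rightarrow>
      (\<Sum>pp\<in>UNIV. \<Sum>ee\<in>UNIV. \<Sum>rr\<in>UNIV.
         (-1) ^ (deg be * deg ga + deg pp * deg ee + deg pp * deg al + deg ee)
         * m ga pp ee * m ta rr de * mu be ee rr * mu si al pp))"

text \<open>Heisenberg double H(A*): basis (si,ta) stands for e~_si (x) e~^ta.\<close>

definition HAs_mult ::
  "('i::finite \<Rightarrow> nat) \<Rightarrow> ('i \<Rightarrow> 'i \<Rightarrow> 'i \<Rightarrow> complex) \<Rightarrow> ('i \<Rightarrow> 'i \<Rightarrow> 'i \<Rightarrow> complex)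
   \<Rightarrow> 'i \<times> 'i \<Rightarrow> 'i \<times> 'i \<Rightarrow> 'i \<times> 'i \<Rightarrow> complex" where
  "HAs_mult deg m mu x y z =
    (case x of (al, be) \<Rightarrow> case y of (ga, de) \<Rightarrow> case z of (si, ta) \<Rightarrow>
      (\<Sum>rr\<in>UNIV. \<Sum>ee\<in>UNIV. \<Sum>pp\<in>UNIV.
         (-1) ^ (deg rr * deg pp + deg rr * deg ee + deg pp * deg de)
         * mu ga rr ee * mu ta pp de * m be ee pp * m si al rr))"

definition hdeg :: "('i \<Rightarrow> nat) \<Rightarrow> 'i \<times> 'i \<Rightarrow> nat" where
  "hdeg deg p = deg (fst p) + deg (snd p)"

definition oneHA :: "('i \<Rightarrow> complex) \<Rightarrow> ('i \<Rightarrow> complex) \<Rightarrow> 'i \<times> 'i \<Rightarrow> complex" where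
  "oneHA u eps p = eps (fst p) * u (snd p)"          (* 1 (x) 1 in A* (x) A *)
definition oneHAs :: "('i \<Rightarrow> complex) \<Rightarrow> ('i \<Rightarrow> complex) \<Rightarrow> 'i \<times> 'i \<Rightarrow> complex" where
  "oneHAs u eps p = u (fst p) * eps (snd p)"         (* 1 (x) 1 in A (x) A* *)

definition e_low :: "('i \<Rightarrow> complex) \<Rightarrow> 'i \<Rightarrow> 'i \<times> 'i \<Rightarrow> complex" where
  "e_low eps al p = eps (fst p) * (if snd p = al then 1 else 0)"   (* e_al = 1 (x) e_al in H(A) *)
definition e_up :: "('i \<Rightarrow> complex) \<Rightarrow> 'i \<Rightarrow> 'i \<times> 'i \<Rightarrow> complex" where
  "e_up u al p = (if fst p = al then 1 else 0) * u (snd p)"        (* e^al = e^al (x) 1 in H(A) *)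
definition et_low :: "('i \<Rightarrow> complex) \<Rightarrow> 'i \<Rightarrow> 'i \<times> 'i \<Rightarrow> complex" where
  "et_low eps al p = (if fst p = al then 1 else 0) * eps (snd p)"  (* e~_al = e~_al (x) 1 in H(A* ) *)
definition et_up :: "('i \<Rightarrow> complex) \<Rightarrow> 'i \<Rightarrow> 'i \<times> 'i \<Rightarrow> complex" where
  "et_up u al p = u (fst p) * (if snd p = al then 1 else 0)"       (* e~^al = 1 (x) e~^al in H(A* ) *)

definition S_el :: "('i::finite \<Rightarrow> nat) \<Rightarrow> ('i \<Rightarrow> complex) \<Rightarrow> ('i \<Rightarrow> complex)
    \<Rightarrow> ('i \<times> 'i) \<times> ('i \<times> 'i) \<Rightarrow> complex" where
  "S_el deg u eps q = (\<Sum>al\<in>UNIV. (-1) ^ deg al * e_low eps al (fst q) * e_up u al (snd q))"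
definition St_el :: "('i::finite \<Rightarrow> complex) \<Rightarrow> ('i \<Rightarrow> complex)
    \<Rightarrow> ('i \<times> 'i) \<times> ('i \<times> 'i) \<Rightarrow> complex" where
  "St_el u eps q = (\<Sum>al\<in>UNIV. et_low eps al (fst q) * et_up u al (snd q))"
definition S1_el :: "('i::finite \<Rightarrow> nat) \<Rightarrow> ('i \<Rightarrow> complex) \<Rightarrow> ('i \<Rightarrow> complex) \<Rightarrow> nat \<Rightarrow> nat
    \<Rightarrow> ('i \<times> 'i) \<times> ('i \<times> 'i) \<Rightarrow> complex" where
  "S1_el deg u eps a b' q =
     (\<Sum>al\<in>UNIV. (-1) ^ ((a + b' + 1) * deg al) * et_low eps al (fst q) * e_up u al (snd q))"
definition S2_el :: "('i::finite \<Rightarrow> nat) \<Rightarrow> ('i \<Rightarrow> complex) \<Rightarrow> ('i \<Rightarrow> complex) \<Rightarrow> nat \<Rightarrow> nat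
    \<Rightarrow> ('i \<times> 'i) \<times> ('i \<times> 'i) \<Rightarrow> complex" where
  "S2_el deg u eps a b' q =
     (\<Sum>al\<in>UNIV. (-1) ^ ((a + b') * deg al) * e_low eps al (fst q) * et_up u al (snd q))"

text \<open>Product in a graded triple tensor product B1 (x) B2 (x) B3 of algebras given by
degree functions d_i and structure constants c_i (c x y z = coefficient of z in x y):
(x1(x)x2(x)x3)(y1(x)y2(x)y3) = (-1)^(|y1|(|x2|+|x3|) + |y2||x3|) x1y1 (x) x2y2 (x) x3y3.\<close>
definition prod3 ::
  "('a::finite \<Rightarrow> nat) \<Rightarrow> ('b::finite \<Rightarrow> nat) \<Rightarrow> ('c::finite \<Rightarrow> nat)
   \<Rightarrow> ('a \<Rightarrow> 'a \<Rightarrow> 'a \<Rightarrow> complex) \<Rightarrow> ('b \<Rightarrow> 'b \<Rightarrow> 'b \<Rightarrow> complex) \<Rightarrow> ('c \<Rightarrow> 'c \<Rightarrow> 'c \<Rightarrow> complex)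
   \<Rightarrow> ('a \<times> 'b \<times> 'c \<Rightarrow> complex) \<Rightarrow> ('a \<times> 'b \<times> 'c \<Rightarrow> complex) \<Rightarrow> ('a \<times> 'b \<times> 'c \<Rightarrow> complex)" where
  "prod3 d1 d2 d3 c1 c2 c3 f g z =
    (\<Sum>x\<in>UNIV. \<Sum>y\<in>UNIV.
       (case x of (x1, x2, x3) \<Rightarrow> case y of (y1, y2, y3) \<Rightarrow> case z of (z1, z2, z3) \<Rightarrow>
         (-1) ^ (d1 y1 * (d2 x2 + d3 x3) + d2 y2 * d3 x3)
         * f x * g y * c1 x1 y1 z1 * c2 x2 y2 z2 * c3 x3 y3 z3))"

definition leg12 :: "('c \<Rightarrow> complex) \<Rightarrow> ('a \<times> 'b \<Rightarrow> complex) \<Rightarrow> 'a \<times> 'b \<times> 'c \<Rightarrow> complex" where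
  "leg12 one3 X z = (case z of (z1, z2, z3) \<Rightarrow> X (z1, z2) * one3 z3)"
definition leg13 :: "('b \<Rightarrow> complex) \<Rightarrow> ('a \<times> 'c \<Rightarrow> complex) \<Rightarrow> 'a \<times> 'b \<times> 'c \<Rightarrow> complex" where
  "leg13 one2 X z = (case z of (z1, z2, z3) \<Rightarrow> X (z1, z3) * one2 z2)"
definition leg23 :: "('a \<Rightarrow> complex) \<Rightarrow> ('b \<times> 'c \<Rightarrow> complex) \<Rightarrow> 'a \<times> 'b \<times> 'c \<Rightarrow> complex" where
  "leg23 one1 X z = (case z of (z1, z2, z3) \<Rightarrow> one1 z1 * X (z2, z3))"

end

theory Submission
  imports Defs
begin


definition mulc :: "('a::finite \<Rightarrow> 'a \<Rightarrow> 'a \<Rightarrow> complex) \<Rightarrow> ('a \<Rightarrow> complex) \<Rightarrow> ('a \<Rightarrow> complex) \<Rightarrow> 'a \<Rightarrow> complex" where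
  "mulc c f g z = (\<Sum>x\<in>UNIV. \<Sum>y\<in>UNIV. f x * g y * c x y z)"

definition homog :: "('a \<Rightarrow> nat) \<Rightarrow> nat \<Rightarrow> ('a \<Rightarrow> complex) \<Rightarrow> bool" where
  "homog d k f \<longleftrightarrow> (\<forall>x. f x \<noteq> 0 \<longrightarrow> even (d x + k))"

definition HT3 :: "nat \<Rightarrow> ('a \<Rightarrow> complex) \<Rightarrow> nat \<Rightarrow> ('b \<Rightarrow> complex) \<Rightarrow> nat \<Rightarrow> ('c \<Rightarrow> complex) \<Rightarrow> 'a \<times> 'b \<times> 'c \<Rightarrow> complex" where
  "HT3 k1 f1 k2 f2 k3 f3 z = (case z of (z1, z2, z3) \<Rightarrow> f1 z1 * f2 z2 * f3 z3)"

lemma neg1_par: "even (p + p') \<Longrightarrow> (-1::complex)^p = (-1)^p'"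
  by (metis even_add neg_one_even_power neg_one_odd_power)

lemma sgn_cong: "even (p + p') \<Longrightarrow> even (q + q') \<Longrightarrow> (-1::complex)^(p*q) = (-1)^(p'*q')"
proof -
  assume a: "even (p + p')" "even (q + q')"
  have "even (p*q + p'*q')" using a by (auto simp: even_add)
  then show ?thesis by (rule neg1_par)
qed

lemma sum_UNIV_pair: "(\<Sum>x\<in>(UNIV::('a::finite \<times> 'b::finite) set). f x) = (\<Sum>a\<in>UNIV. \<Sum>b\<in>UNIV. f (a, b))"
  by (simp add: sum.cartesian_product flip: UNIV_Times_UNIV)

lemma swap3: "(\<Sum>a\<in>A. \<Sum>b\<in>B. \<Sum>c\<in>C. f a b c) = (\<Sum>a\<in>A. \<Sum>c\<in>C. \<Sum>b\<in>B. f a b c)"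
  by (rule sum.cong[OF refl], rule sum.swap)

lemma mv3: "(\<Sum>a\<in>A. \<Sum>b\<in>B. \<Sum>c\<in>C. f a b c) = (\<Sum>c\<in>C. \<Sum>a\<in>A. \<Sum>b\<in>B. f a b c)"
proof -
  have "(\<Sum>a\<in>A. \<Sum>b\<in>B. \<Sum>c\<in>C. f a b c) = (\<Sum>a\<in>A. \<Sum>c\<in>C. \<Sum>b\<in>B. f a b c)"
    by (rule sum.cong[OF refl], rule sum.swap)
  also have "\<dots> = (\<Sum>c\<in>C. \<Sum>a\<in>A. \<Sum>b\<in>B. f a b c)" by (rule sum.swap)
  finally show ?thesis .
qed

lemma reorder6: "(\<Sum>x1\<in>A. \<Sum>x2\<in>B. \<Sum>x3\<in>C. \<Sum>y1\<in>D. \<Sum>y2\<in>E. \<Sum>y3\<in>F. f x1 x2 x3 y1 y2 y3)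
   = (\<Sum>x1\<in>A. \<Sum>y1\<in>D. \<Sum>x2\<in>B. \<Sum>y2\<in>E. \<Sum>x3\<in>C. \<Sum>y3\<in>F. f x1 x2 x3 y1 y2 y3)"
  apply (rule sum.cong[OF refl])
  apply (rule trans[OF mv3])
  apply (rule sum.cong[OF refl])+
  apply (rule sum.swap)
  done

lemma h1: "(s::complex) * ((\<Sum>a\<in>A. \<Sum>b\<in>B. p a b) * X) = (\<Sum>a\<in>A. \<Sum>b\<in>B. (s * p a b) * X)"
  by (simp add: sum_distrib_left sum_distrib_right mult.assoc)
lemma h0: "(s::complex) * (\<Sum>a\<in>A. \<Sum>b\<in>B. p a b) = (\<Sum>a\<in>A. \<Sum>b\<in>B. s * p a b)"
  by (simp add: sum_distrib_left)

lemma fact3: "(\<Sum>a\<in>A. \<Sum>b\<in>B. \<Sum>c\<in>C. \<Sum>d\<in>D. \<Sum>e\<in>E. \<Sum>f\<in>F. (s::complex) * (p a b * q c d * r e f))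
   = s * ((\<Sum>a\<in>A. \<Sum>b\<in>B. p a b) * ((\<Sum>c\<in>C. \<Sum>d\<in>D. q c d) * (\<Sum>e\<in>E. \<Sum>f\<in>F. r e f)))"
proof -
  have "s * ((\<Sum>a\<in>A. \<Sum>b\<in>B. p a b) * ((\<Sum>c\<in>C. \<Sum>d\<in>D. q c d) * (\<Sum>e\<in>E. \<Sum>f\<in>F. r e f)))
     = (\<Sum>a\<in>A. \<Sum>b\<in>B. (s * p a b) * ((\<Sum>c\<in>C. \<Sum>d\<in>D. q c d) * (\<Sum>e\<in>E. \<Sum>f\<in>F. r e f)))"
    by (rule h1)
  also have "\<dots> = (\<Sum>a\<in>A. \<Sum>b\<in>B. \<Sum>c\<in>C. \<Sum>d\<in>D. ((s * p a b) * q c d) * (\<Sum>e\<in>E. \<Sum>f\<in>F. r e f))"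
    by (intro sum.cong refl) (rule h1)
  also have "\<dots> = (\<Sum>a\<in>A. \<Sum>b\<in>B. \<Sum>c\<in>C. \<Sum>d\<in>D. \<Sum>e\<in>E. \<Sum>f\<in>F. ((s * p a b) * q c d) * r e f)"
    by (intro sum.cong refl) (rule h0)
  finally show ?thesis by (simp add: mult.assoc)
qed

lemma prod3_HT3:
  fixes d1 :: "'a::finite \<Rightarrow> nat" and d2 :: "'b::finite \<Rightarrow> nat" and d3 :: "'c::finite \<Rightarrow> nat"
  assumes h: "homog d2 k2 f2" "homog d3 k3 f3" "homog d1 l1 g1" "homog d2 l2 g2"
  shows "prod3 d1 d2 d3 c1 c2 c3 (HT3 k1 f1 k2 f2 k3 f3) (HT3 l1 g1 l2 g2 l3 g3)
     = (\<lambda>z. (-1)^(l1*(k2+k3)+l2*k3) * HT3 (k1+l1) (mulc c1 f1 g1) (k2+l2) (mulc c2 f2 g2) (k3+l3) (mulc c3 f3 g3) z)"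
proof
  fix z :: "'a \<times> 'b \<times> 'c"
  obtain z1 z2 z3 where z: "z = (z1, z2, z3)" by (cases z) auto
  let ?s = "(-1::complex)^(l1*(k2+k3)+l2*k3)"
  have tw: "(-1::complex) ^ (d1 y1 * (d2 x2 + d3 x3) + d2 y2 * d3 x3) * (f1 x1 * f2 x2 * f3 x3) * (g1 y1 * g2 y2 * g3 y3)
      = ?s * (f1 x1 * f2 x2 * f3 x3) * (g1 y1 * g2 y2 * g3 y3)" for x1 x2 x3 y1 y2 y3
  proof (cases "f2 x2 = 0 \<or> f3 x3 = 0 \<or> g1 y1 = 0 \<or> g2 y2 = 0")
    case True then show ?thesis by auto
  next
    case False
    then have e: "even (d2 x2 + k2)" "even (d3 x3 + k3)" "even (d1 y1 + l1)" "even (d2 y2 + l2)"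
      using h unfolding homog_def by auto
    have "even (d2 x2 + d3 x3 + (k2 + k3))" using e by (auto simp: even_add)
    then have "(-1::complex) ^ (d1 y1 * (d2 x2 + d3 x3) + d2 y2 * d3 x3) = ?s"
      using e by (simp add: power_add sgn_cong[of "d1 y1" l1 "d2 x2 + d3 x3" "k2+k3"] sgn_cong[of "d2 y2" l2 "d3 x3" k3])
    then show ?thesis by simp
  qed
  have "prod3 d1 d2 d3 c1 c2 c3 (HT3 k1 f1 k2 f2 k3 f3) (HT3 l1 g1 l2 g2 l3 g3) z
     = (\<Sum>x1\<in>UNIV. \<Sum>x2\<in>UNIV. \<Sum>x3\<in>UNIV. \<Sum>y1\<in>UNIV. \<Sum>y2\<in>UNIV. \<Sum>y3\<in>UNIV.
         ?s * ((f1 x1 * g1 y1 * c1 x1 y1 z1) * (f2 x2 * g2 y2 * c2 x2 y2 z2) * (f3 x3 * g3 y3 * c3 x3 y3 z3)))"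
    unfolding prod3_def HT3_def z
    apply (simp add: sum_UNIV_pair)
    apply (intro sum.cong refl)
    subgoal for x1 x2 x3 y1 y2 y3
      using tw[of y1 x2 x3 y2 x1 y3] by (simp add: mult_ac) blast
    done
  also have "\<dots> = (\<Sum>x1\<in>UNIV. \<Sum>y1\<in>UNIV. \<Sum>x2\<in>UNIV. \<Sum>y2\<in>UNIV. \<Sum>x3\<in>UNIV. \<Sum>y3\<in>UNIV.
         ?s * ((f1 x1 * g1 y1 * c1 x1 y1 z1) * (f2 x2 * g2 y2 * c2 x2 y2 z2) * (f3 x3 * g3 y3 * c3 x3 y3 z3)))"
    by (rule reorder6)
  also have "\<dots> = ?s * ((\<Sum>x1\<in>UNIV. \<Sum>y1\<in>UNIV. f1 x1 * g1 y1 * c1 x1 y1 z1) * ((\<Sum>x2\<in>UNIV. \<Sum>y2\<in>UNIV. f2 x2 * g2 y2 * c2 x2 y2 z2) * (\<Sum>x3\<in>UNIV. \<Sum>y3\<in>UNIV. f3 x3 * g3 y3 * c3 x3 y3 z3)))"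
    by (rule fact3)
  also have "\<dots> = ?s * HT3 (k1+l1) (mulc c1 f1 g1) (k2+l2) (mulc c2 f2 g2) (k3+l3) (mulc c3 f3 g3) z"
    unfolding HT3_def mulc_def z by (simp add: mult.assoc)
  finally show "prod3 d1 d2 d3 c1 c2 c3 (HT3 k1 f1 k2 f2 k3 f3) (HT3 l1 g1 l2 g2 l3 g3) z = ?s * HT3 (k1+l1) (mulc c1 f1 g1) (k2+l2) (mulc c2 f2 g2) (k3+l3) (mulc c3 f3 g3) z" .
qed

definition W3 where
  "W3 d1 d2 d3 c1 c2 c3 x y z = (case x of (x1, x2, x3) \<Rightarrow> case y of (y1, y2, y3) \<Rightarrow> case z of (z1, z2, z3) \<Rightarrow>
         (-1::complex) ^ (d1 y1 * (d2 x2 + d3 x3) + d2 y2 * d3 x3) * c1 x1 y1 z1 * c2 x2 y2 z2 * c3 x3 y3 z3)"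

lemma prod3_alt: "prod3 d1 d2 d3 c1 c2 c3 F G z = (\<Sum>x\<in>UNIV. \<Sum>y\<in>UNIV. F x * G y * W3 d1 d2 d3 c1 c2 c3 x y z)"
  unfolding prod3_def W3_def
  by (intro sum.cong refl) (auto split: prod.split simp: mult_ac)

lemma prod3_sumL: "prod3 d1 d2 d3 c1 c2 c3 (\<lambda>z. \<Sum>i\<in>I. F i z) G = (\<lambda>z. \<Sum>i\<in>I. prod3 d1 d2 d3 c1 c2 c3 (F i) G z)"
proof
  fix z
  have "prod3 d1 d2 d3 c1 c2 c3 (\<lambda>z. \<Sum>i\<in>I. F i z) G z = (\<Sum>x\<in>UNIV. \<Sum>y\<in>UNIV. \<Sum>i\<in>I. F i x * G y * W3 d1 d2 d3 c1 c2 c3 x y z)"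
    unfolding prod3_alt by (simp add: sum_distrib_right)
  also have "\<dots> = (\<Sum>i\<in>I. \<Sum>x\<in>UNIV. \<Sum>y\<in>UNIV. F i x * G y * W3 d1 d2 d3 c1 c2 c3 x y z)" by (rule mv3)
  finally show "prod3 d1 d2 d3 c1 c2 c3 (\<lambda>z. \<Sum>i\<in>I. F i z) G z = (\<Sum>i\<in>I. prod3 d1 d2 d3 c1 c2 c3 (F i) G z)"
    by (simp add: prod3_alt)
qed

lemma prod3_sumR: "prod3 d1 d2 d3 c1 c2 c3 F (\<lambda>z. \<Sum>i\<in>I. G i z) = (\<lambda>z. \<Sum>i\<in>I. prod3 d1 d2 d3 c1 c2 c3 F (G i) z)"
proof
  fix z
  have "prod3 d1 d2 d3 c1 c2 c3 F (\<lambda>z. \<Sum>i\<in>I. G i z) z = (\<Sum>x\<in>UNIV. \<Sum>y\<in>UNIV. \<Sum>i\<in>I. F x * G i y * W3 d1 d2 d3 c1 c2 c3 x y z)"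
    unfolding prod3_alt by (simp add: sum_distrib_right sum_distrib_left)
  also have "\<dots> = (\<Sum>i\<in>I. \<Sum>x\<in>UNIV. \<Sum>y\<in>UNIV. F x * G i y * W3 d1 d2 d3 c1 c2 c3 x y z)" by (rule mv3)
  finally show "prod3 d1 d2 d3 c1 c2 c3 F (\<lambda>z. \<Sum>i\<in>I. G i z) z = (\<Sum>i\<in>I. prod3 d1 d2 d3 c1 c2 c3 F (G i) z)"
    by (simp add: prod3_alt)
qed

lemma prod3_scaleL: "prod3 d1 d2 d3 c1 c2 c3 (\<lambda>z. k * F z) G = (\<lambda>z. k * prod3 d1 d2 d3 c1 c2 c3 F G z)"
  unfolding prod3_alt by (simp add: sum_distrib_left mult_ac)

lemma prod3_scaleR: "prod3 d1 d2 d3 c1 c2 c3 F (\<lambda>z. k * G z) = (\<lambda>z. k * prod3 d1 d2 d3 c1 c2 c3 F G z)"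
  unfolding prod3_alt by (simp add: sum_distrib_left mult_ac)

lemma leg12_sum:
  assumes "\<And>q. X q = (\<Sum>al\<in>I. k al * f al (fst q) * g al (snd q))"
  shows "leg12 o1 X = (\<lambda>z. \<Sum>al\<in>I. k al * HT3 (d1 al) (f al) (d2 al) (g al) 0 o1 z)"
  by (auto simp: fun_eq_iff leg12_def HT3_def assms sum_distrib_right sum_distrib_left mult_ac split: prod.split)

lemma leg13_sum:
  assumes "\<And>q. X q = (\<Sum>al\<in>I. k al * f al (fst q) * g al (snd q))"
  shows "leg13 o1 X = (\<lambda>z. \<Sum>al\<in>I. k al * HT3 (d1 al) (f al) 0 o1 (d2 al) (g al) z)"
  by (auto simp: fun_eq_iff leg13_def HT3_def assms sum_distrib_right sum_distrib_left mult_ac split: prod.split)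

lemma leg23_sum:
  assumes "\<And>q. X q = (\<Sum>al\<in>I. k al * f al (fst q) * g al (snd q))"
  shows "leg23 o1 X = (\<lambda>z. \<Sum>al\<in>I. k al * HT3 0 o1 (d1 al) (f al) (d2 al) (g al) z)"
  by (auto simp: fun_eq_iff leg23_def HT3_def assms sum_distrib_left mult_ac split: prod.split)

definition graded :: "('a \<Rightarrow> nat) \<Rightarrow> ('a \<Rightarrow> 'a \<Rightarrow> 'a \<Rightarrow> complex) \<Rightarrow> bool" where
  "graded d c \<longleftrightarrow> (\<forall>x y z. c x y z \<noteq> 0 \<longrightarrow> even (d z + d x + d y))"

lemma homog_mulc:
  assumes "graded d c" "homog d k f" "homog d l g"
  shows "homog d (k + l) (mulc c f g)"
  unfolding homog_def
proof (intro allI impI)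
  fix z assume "mulc c f g z \<noteq> 0"
  then obtain x y where "f x * g y * c x y z \<noteq> 0"
    unfolding mulc_def by (meson sum.not_neutral_contains_not_neutral)
  then have "f x \<noteq> 0" "g y \<noteq> 0" "c x y z \<noteq> 0" by auto
  then have "even (d x + k)" "even (d y + l)" "even (d z + d x + d y)"
    using assms unfolding homog_def graded_def by blast+
  then show "even (d z + (k + l))" by presburger
qed



lemma out4: "(\<Sum>a\<in>A. \<Sum>b\<in>B. \<Sum>c\<in>C. \<Sum>d\<in>D. \<Sum>p\<in>P. f a b c d p) = (\<Sum>p\<in>P. \<Sum>a\<in>A. \<Sum>b\<in>B. \<Sum>c\<in>C. \<Sum>d\<in>D. f a b c d p)"
proof -
  have "(\<Sum>a\<in>A. \<Sum>b\<in>B. \<Sum>c\<in>C. \<Sum>d\<in>D. \<Sum>p\<in>P. f a b c d p) = (\<Sum>a\<in>A. \<Sum>b\<in>B. \<Sum>p\<in>P. \<Sum>c\<in>C. \<Sum>d\<in>D. f a b c d p)"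
    by (intro sum.cong refl) (rule mv3)
  also have "\<dots> = (\<Sum>p\<in>P. \<Sum>a\<in>A. \<Sum>b\<in>B. \<Sum>c\<in>C. \<Sum>d\<in>D. f a b c d p)" by (rule mv3)
  finally show ?thesis .
qed

lemma reorder7: "(\<Sum>a\<in>A. \<Sum>b\<in>B. \<Sum>c\<in>C. \<Sum>d\<in>D. \<Sum>p\<in>P. \<Sum>e\<in>E. \<Sum>r\<in>R. f a b c d p e r)
  = (\<Sum>p\<in>P. \<Sum>e\<in>E. \<Sum>r\<in>R. \<Sum>a\<in>A. \<Sum>b\<in>B. \<Sum>c\<in>C. \<Sum>d\<in>D. f a b c d p e r)"
  apply (rule trans[OF out4])
  apply (rule sum.cong[OF refl])
  apply (rule trans[OF out4])
  apply (rule sum.cong[OF refl])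
  apply (rule out4)
  done

lemma fact4: "(\<Sum>a\<in>A. \<Sum>b\<in>B. \<Sum>c\<in>C. \<Sum>d\<in>D. (s::complex) * (p a * q b * r c * t d))
   = s * (\<Sum>a\<in>A. p a) * (\<Sum>b\<in>B. q b) * (\<Sum>c\<in>C. r c) * (\<Sum>d\<in>D. t d)"
  by (simp add: sum_distrib_left sum_distrib_right mult_ac)

definition dl :: "'a \<Rightarrow> 'a \<Rightarrow> complex" where "dl a x = (if x = a then 1 else 0)"

lemma ifmult[simp]: "(if P then 1 else 0) * (y::complex) = (if P then y else 0)"
  "y * (if P then 1 else 0) = (if P then y else 0)"
  "(if P then x else 0) * y = (if P then x * y else 0)"
  "y * (if P then x else 0) = (if P then y * x else 0)"
  by auto

lemma sum_if_out[simp]: "(\<Sum>x\<in>A. if P then f x else 0) = (if P then sum f A else 0)"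
  by simp

lemma sum_dl[simp]: "(\<Sum>x\<in>(UNIV::'a::finite set). dl a x * F x) = F a"
proof -
  have "(\<Sum>x\<in>UNIV. dl a x * F x) = (\<Sum>x\<in>UNIV. if x = a then F x else 0)"
    by (intro sum.cong) (auto simp: dl_def)
  then show ?thesis by simp
qed

lemma fact3b: "(\<Sum>a\<in>A. \<Sum>b\<in>B. \<Sum>c\<in>C. (p a * q b * r c :: complex)) = sum p A * sum q B * sum r C"
proof -
  have "(\<Sum>a\<in>A. \<Sum>b\<in>B. \<Sum>c\<in>C. (p a * q b * r c :: complex)) = (\<Sum>a\<in>A. \<Sum>b\<in>B. p a * q b * sum r C)"
    by (simp only: sum_distrib_left[symmetric])
  also have "\<dots> = (\<Sum>a\<in>A. p a * sum q B * sum r C)"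
    by (simp only: sum_distrib_right[symmetric] sum_distrib_left[symmetric])
  also have "\<dots> = sum p A * sum q B * sum r C"
    by (simp only: sum_distrib_right[symmetric])
  finally show ?thesis .
qed
lemma fact2b: "(\<Sum>a\<in>A. \<Sum>b\<in>B. (p a * q b :: complex)) = sum p A * sum q B"
  by (simp add: sum_product)

lemma mulc_unitL:
  assumes "\<And>y z. (\<Sum>x\<in>UNIV. o1 x * c x y z) = (if y = z then 1 else 0)"
  shows "mulc c o1 f = f"
proof
  fix z
  have "mulc c o1 f z = (\<Sum>y\<in>UNIV. f y * (\<Sum>x\<in>UNIV. o1 x * c x y z))"
    unfolding mulc_def by (subst sum.swap) (simp add: sum_distrib_left mult_ac)
  then show "mulc c o1 f z = f z" using assms by simp
qed

lemma mulc_unitR: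
  assumes "\<And>x z. (\<Sum>y\<in>UNIV. o1 y * c x y z) = (if x = z then 1 else 0)"
  shows "mulc c f o1 = f"
proof
  fix z
  have "mulc c f o1 z = (\<Sum>x\<in>UNIV. f x * (\<Sum>y\<in>UNIV. o1 y * c x y z))"
    unfolding mulc_def by (simp add: sum_distrib_left mult_ac)
  then show "mulc c f o1 z = f z" using assms by simp
qed

lemma mulc_basisL: "mulc c o1 (\<lambda>w. dl (fst y) (fst w) * dl (snd y) (snd w)) z = (\<Sum>x\<in>UNIV. o1 x * c x y z)"
  unfolding mulc_def dl_def by (simp add: sum_UNIV_pair prod_eq_iff)

lemma mulc_basisR: "mulc c (\<lambda>w. dl (fst x) (fst w) * dl (snd x) (snd w)) o1 z = (\<Sum>y\<in>UNIV. o1 y * c x y z)"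
  unfolding mulc_def dl_def by (simp add: sum_UNIV_pair prod_eq_iff mult.commute)
  
locale ghopf =
  fixes deg :: "'i::finite \<Rightarrow> nat" and m mu :: "'i \<Rightarrow> 'i \<Rightarrow> 'i \<Rightarrow> complex"
    and u eps :: "'i \<Rightarrow> complex" and s :: "'i \<Rightarrow> 'i \<Rightarrow> complex"
  assumes hopf: "graded_hopf deg m mu u eps s"
begin

lemma H0: "(\<forall>x. deg x < 2)"
  using hopf unfolding graded_hopf_def by (elim conjE) assumption
lemma H1: "(\<forall>c a b. m c a b \<noteq> 0 \<longrightarrow> deg c mod 2 = (deg a + deg b) mod 2)"
  using hopf unfolding graded_hopf_def by (elim conjE) assumption
lemma H2: "(\<forall>a b c. mu a b c \<noteq> 0 \<longrightarrow> deg a mod 2 = (deg b + deg c) mod 2)"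
  using hopf unfolding graded_hopf_def by (elim conjE) assumption
lemma H3: "(\<forall>x. u x \<noteq> 0 \<longrightarrow> deg x = 0)"
  using hopf unfolding graded_hopf_def by (elim conjE) assumption
lemma H4: "(\<forall>x. eps x \<noteq> 0 \<longrightarrow> deg x = 0)"
  using hopf unfolding graded_hopf_def by (elim conjE) assumption
lemma H5: "(\<forall>a c. (\<Sum>k\<in>UNIV. u k * m c k a) = (if a = c then 1 else 0) \<and>
           (\<Sum>k\<in>UNIV. u k * m c a k) = (if a = c then 1 else 0))"
  using hopf unfolding graded_hopf_def by (elim conjE) assumption
lemma H6: "(\<forall>a b. (\<Sum>k\<in>UNIV. eps k * mu a k b) = (if a = b then 1 else 0) \<and>
           (\<Sum>k\<in>UNIV. eps k * mu a b k) = (if a = b then 1 else 0))"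
  using hopf unfolding graded_hopf_def by (elim conjE) assumption
lemma H7: "(\<forall>x y. (\<Sum>k\<in>UNIV. u k * mu k x y) = u x * u y)"
  using hopf unfolding graded_hopf_def by (elim conjE) assumption
lemma H8: "(\<forall>a b. (\<Sum>k\<in>UNIV. m k a b * eps k) = eps a * eps b)"
  using hopf unfolding graded_hopf_def by (elim conjE) assumption
lemma H9: "(\<Sum>k\<in>UNIV. u k * eps k) = 1"
  using hopf unfolding graded_hopf_def by (elim conjE) assumption
lemmas H = H0 H1 H2 H3 H4 H5 H6 H7 H8 H9

lemma deg_lt2: "deg x < 2" using H by blast
lemma m_deg: "m c a b \<noteq> 0 \<Longrightarrow> deg c mod 2 = (deg a + deg b) mod 2" using H by blast
lemma mu_deg: "mu a b c \<noteq> 0 \<Longrightarrow> deg a mod 2 = (deg b + deg c) mod 2" using H by blast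
lemma u_deg: "u x \<noteq> 0 \<Longrightarrow> deg x = 0" using H by blast
lemma eps_deg: "eps x \<noteq> 0 \<Longrightarrow> deg x = 0" using H by blast
lemma unitL: "(\<Sum>k\<in>UNIV. u k * m c k a) = (if a = c then 1 else 0)" using H by blast
lemma unitR: "(\<Sum>k\<in>UNIV. u k * m c a k) = (if a = c then 1 else 0)" using H by blast
lemma counitL: "(\<Sum>k\<in>UNIV. eps k * mu a k b) = (if a = b then 1 else 0)" using H by blast
lemma counitR: "(\<Sum>k\<in>UNIV. eps k * mu a b k) = (if a = b then 1 else 0)" using H by blast
lemma u_mu: "(\<Sum>k\<in>UNIV. u k * mu k x y) = u x * u y" using H by blast
lemma m_eps: "(\<Sum>k\<in>UNIV. m k a b * eps k) = eps a * eps b" using H by blast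
lemma u_eps: "(\<Sum>k\<in>UNIV. u k * eps k) = 1" using H by blast
lemma eps_m: "(\<Sum>k\<in>UNIV. eps k * m k a b) = eps a * eps b" using m_eps by (simp add: mult.commute)

lemma GA:
  assumes h: "homog deg a f1" "homog deg b f2" "homog deg c g1"
  shows "mulc (HA_mult deg m mu) (\<lambda>p. f1 (fst p) * f2 (snd p)) (\<lambda>p. g1 (fst p) * g2 (snd p)) (\<sigma>, \<tau>)
   = (\<Sum>pp\<in>UNIV. \<Sum>ee\<in>UNIV. \<Sum>rr\<in>UNIV. (-1)^(b*c + deg pp * deg ee + deg pp * a + deg ee) *
        (\<Sum>al\<in>UNIV. f1 al * mu \<sigma> al pp) * (\<Sum>be\<in>UNIV. f2 be * mu be ee rr) *
        (\<Sum>ga\<in>UNIV. g1 ga * m ga pp ee) * (\<Sum>de\<in>UNIV. g2 de * m \<tau> rr de))"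
proof -
  have tw: "f1 al * f2 be * g1 ga * g2 de * ((-1::complex) ^ (deg be * deg ga + deg pp * deg ee + deg pp * deg al + deg ee) * X)
     = (-1)^(b*c + deg pp * deg ee + deg pp * a + deg ee) * (f1 al * f2 be * g1 ga * g2 de * X)" for al be ga de pp ee X
  proof (cases "f1 al = 0 \<or> f2 be = 0 \<or> g1 ga = 0")
    case True then show ?thesis by auto
  next
    case False
    then have e: "even (deg al + a)" "even (deg be + b)" "even (deg ga + c)" using h unfolding homog_def by auto
    have "(-1::complex) ^ (deg be * deg ga) = (-1)^(b*c)" using e by (intro sgn_cong)
    moreover have "(-1::complex) ^ (deg pp * deg al) = (-1)^(deg pp * a)" using e by (intro sgn_cong) auto
    ultimately show ?thesis by (simp add: power_add)
  qed
  have "mulc (HA_mult deg m mu) (\<lambda>p. f1 (fst p) * f2 (snd p)) (\<lambda>p. g1 (fst p) * g2 (snd p)) (\<sigma>, \<tau>)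
    = (\<Sum>al\<in>UNIV. \<Sum>be\<in>UNIV. \<Sum>ga\<in>UNIV. \<Sum>de\<in>UNIV. \<Sum>pp\<in>UNIV. \<Sum>ee\<in>UNIV. \<Sum>rr\<in>UNIV.
        (-1)^(b*c + deg pp * deg ee + deg pp * a + deg ee) *
        (f1 al * mu \<sigma> al pp * f2 be * mu be ee rr * g1 ga * m ga pp ee * g2 de * m \<tau> rr de))"
    unfolding mulc_def HA_mult_def
    apply (simp add: sum_UNIV_pair sum_distrib_left)
    apply (intro sum.cong refl)
    subgoal for al be ga de pp ee rr
      using tw[of al be ga de pp ee "m ga pp ee * m \<tau> rr de * mu be ee rr * mu \<sigma> al pp"]
      by (simp add: mult_ac)
    done
  also have "\<dots> = (\<Sum>pp\<in>UNIV. \<Sum>ee\<in>UNIV. \<Sum>rr\<in>UNIV. \<Sum>al\<in>UNIV. \<Sum>be\<in>UNIV. \<Sum>ga\<in>UNIV. \<Sum>de\<in>UNIV.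
        (-1)^(b*c + deg pp * deg ee + deg pp * a + deg ee) *
        (f1 al * mu \<sigma> al pp * f2 be * mu be ee rr * g1 ga * m ga pp ee * g2 de * m \<tau> rr de))"
    by (rule reorder7)
  also have "\<dots> = (\<Sum>pp\<in>UNIV. \<Sum>ee\<in>UNIV. \<Sum>rr\<in>UNIV. \<Sum>al\<in>UNIV. \<Sum>be\<in>UNIV. \<Sum>ga\<in>UNIV. \<Sum>de\<in>UNIV.
        (-1)^(b*c + deg pp * deg ee + deg pp * a + deg ee) *
        ((f1 al * mu \<sigma> al pp) * (f2 be * mu be ee rr) * (g1 ga * m ga pp ee) * (g2 de * m \<tau> rr de)))"
    by (simp add: mult.assoc)
  also have "\<dots> = (\<Sum>pp\<in>UNIV. \<Sum>ee\<in>UNIV. \<Sum>rr\<in>UNIV. (-1)^(b*c + deg pp * deg ee + deg pp * a + deg ee) *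
        (\<Sum>al\<in>UNIV. f1 al * mu \<sigma> al pp) * (\<Sum>be\<in>UNIV. f2 be * mu be ee rr) *
        (\<Sum>ga\<in>UNIV. g1 ga * m ga pp ee) * (\<Sum>de\<in>UNIV. g2 de * m \<tau> rr de))"
    by (simp only: fact4)
  finally show ?thesis .
qed

lemma homog_dl: "homog deg (deg a) (dl a)" by (simp add: homog_def dl_def)
lemma homog_u: "homog deg 0 u" using u_deg by (simp add: homog_def)
lemma homog_eps: "homog deg 0 eps" using eps_deg by (simp add: homog_def)

lemma unitA_L: "mulc (HA_mult deg m mu) (oneHA u eps) f = f"
proof (rule mulc_unitL)
  fix y z :: "'i \<times> 'i"
  obtain y1 y2 where y: "y = (y1, y2)" by (cases y)
  obtain z1 z2 where z: "z = (z1, z2)" by (cases z)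
  have "(\<Sum>x\<in>UNIV. oneHA u eps x * HA_mult deg m mu x y z) = mulc (HA_mult deg m mu) (\<lambda>p. eps (fst p) * u (snd p)) (\<lambda>w. dl y1 (fst w) * dl y2 (snd w)) (z1, z2)"
    using mulc_basisL[of "HA_mult deg m mu" "\<lambda>p. eps (fst p) * u (snd p)" "(y1,y2)" "(z1,z2)"]
    by (simp add: oneHA_def z y)
  also have "\<dots> = (\<Sum>ee\<in>UNIV. \<Sum>rr\<in>UNIV. (-1)^(deg z1 * deg ee + deg ee) * (u ee * u rr) * m y1 z1 ee * m z2 rr y2)"
    by (simp add: GA[OF homog_eps homog_u homog_dl] u_mu counitL unitL unitR)
  also have "\<dots> = (\<Sum>ee\<in>UNIV. \<Sum>rr\<in>UNIV. (u ee * m y1 z1 ee) * (u rr * m z2 rr y2))"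
    apply (intro sum.cong refl)
    subgoal for ee rr by (cases "u ee = 0") (auto simp: u_deg)
    done
  also have "\<dots> = (if y = z then 1 else 0)"
    by (simp add: fact2b unitL unitR y z)
  finally show "(\<Sum>x\<in>UNIV. oneHA u eps x * HA_mult deg m mu x y z) = (if y = z then 1 else 0)" .
qed

lemma unitA_R: "mulc (HA_mult deg m mu) f (oneHA u eps) = f"
proof (rule mulc_unitR)
  fix x z :: "'i \<times> 'i"
  obtain x1 x2 where x: "x = (x1, x2)" by (cases x)
  obtain z1 z2 where z: "z = (z1, z2)" by (cases z)
  have "(\<Sum>y\<in>UNIV. oneHA u eps y * HA_mult deg m mu x y z) = mulc (HA_mult deg m mu) (\<lambda>w. dl x1 (fst w) * dl x2 (snd w)) (\<lambda>p. eps (fst p) * u (snd p)) (z1, z2)"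
    using mulc_basisR[of "HA_mult deg m mu" "(x1,x2)" "\<lambda>p. eps (fst p) * u (snd p)" "(z1,z2)"]
    by (simp add: oneHA_def z x)
  also have "\<dots> = (\<Sum>pp\<in>UNIV. \<Sum>ee\<in>UNIV. (-1)^(deg pp * deg ee + deg pp * deg x1 + deg ee) * mu z1 x1 pp * mu x2 ee z2 * (eps pp * eps ee))"
    by (simp add: GA[OF homog_dl homog_dl homog_eps] u_mu counitL unitL unitR eps_m)
  also have "\<dots> = (\<Sum>pp\<in>UNIV. \<Sum>ee\<in>UNIV. (eps pp * mu z1 x1 pp) * (eps ee * mu x2 ee z2))"
    apply (intro sum.cong refl)
    subgoal for pp ee by (cases "eps pp = 0"; cases "eps ee = 0") (auto simp: eps_deg)
    done
  also have "\<dots> = (if x = z then 1 else 0)"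
    by (simp add: fact2b counitL counitR x z)
  finally show "(\<Sum>y\<in>UNIV. oneHA u eps y * HA_mult deg m mu x y z) = (if x = z then 1 else 0)" .
qed

lemma eU_R1: "e_up u al = (\<lambda>p. dl al (fst p) * u (snd p))" by (simp add: e_up_def dl_def fun_eq_iff)
lemma eL_R1: "e_low eps al = (\<lambda>p. eps (fst p) * dl al (snd p))" by (simp add: e_low_def dl_def fun_eq_iff)

lemma G1: "mulc (HA_mult deg m mu) (e_up u al) (e_low eps be) (z1, z2) = (if z1 = al then 1 else 0) * (if z2 = be then 1 else 0)"
proof -
  have "mulc (HA_mult deg m mu) (e_up u al) (e_low eps be) (z1, z2)
     = (\<Sum>pp\<in>UNIV. \<Sum>ee\<in>UNIV. \<Sum>rr\<in>UNIV. (-1)^(deg pp * deg ee + deg pp * deg al + deg ee) * mu z1 al pp * (u ee * u rr) * (eps pp * eps ee) * m z2 rr be)"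
    unfolding eU_R1 eL_R1 by (simp add: GA[OF homog_dl homog_u homog_eps] u_mu counitL unitL unitR eps_m)
  also have "\<dots> = (\<Sum>pp\<in>UNIV. \<Sum>ee\<in>UNIV. \<Sum>rr\<in>UNIV. (eps pp * mu z1 al pp) * (u ee * eps ee) * (u rr * m z2 rr be))"
    apply (intro sum.cong refl)
    subgoal for pp ee rr by (cases "eps pp = 0"; cases "u ee = 0") (auto simp: eps_deg u_deg)
    done
  also have "\<dots> = (if z1 = al then 1 else 0) * (if z2 = be then 1 else 0)"
    by (simp add: fact3b counitR unitL u_eps)
  finally show ?thesis .
qed

lemma G2: "mulc (HA_mult deg m mu) (e_up u al) (e_up u ga) (z1, z2) = (-1)^(deg al * deg ga) * mu z1 al ga * u z2"
proof -
  have "mulc (HA_mult deg m mu) (e_up u al) (e_up u ga) (z1, z2)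
     = (\<Sum>pp\<in>UNIV. \<Sum>ee\<in>UNIV. (-1)^(deg pp * deg ee + deg pp * deg al + deg ee) * mu z1 al pp * (u ee * u z2) * m ga pp ee)"
    unfolding eU_R1 by (simp add: GA[OF homog_dl homog_u homog_dl] u_mu counitL unitL unitR eps_m)
  also have "\<dots> = (\<Sum>pp\<in>UNIV. (-1)^(deg pp * deg al) * mu z1 al pp * u z2 * (\<Sum>ee\<in>UNIV. u ee * m ga pp ee))"
    unfolding sum_distrib_left
    apply (intro sum.cong refl)
    subgoal for pp ee by (cases "u ee = 0") (auto simp: u_deg)
    done
  also have "\<dots> = (-1)^(deg al * deg ga) * mu z1 al ga * u z2"
    by (simp add: unitR mult.commute)
  finally show ?thesis .
qed

lemma G3: "mulc (HA_mult deg m mu) (e_low eps be) (e_low eps de) (z1, z2) = eps z1 * m z2 be de"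
proof -
  have "mulc (HA_mult deg m mu) (e_low eps be) (e_low eps de) (z1, z2)
     = (\<Sum>ee\<in>UNIV. \<Sum>rr\<in>UNIV. (-1)^(deg z1 * deg ee + deg ee) * mu be ee rr * (eps z1 * eps ee) * m z2 rr de)"
    unfolding eL_R1 by (simp add: GA[OF homog_eps homog_dl homog_eps] u_mu counitL unitL unitR eps_m)
  also have "\<dots> = (\<Sum>rr\<in>UNIV. (\<Sum>ee\<in>UNIV. eps ee * mu be ee rr) * (eps z1 * m z2 rr de))"
    apply (subst sum.swap)
    unfolding sum_distrib_right
    apply (intro sum.cong refl)
    subgoal for rr ee by (cases "eps ee = 0"; cases "eps z1 = 0") (auto simp: eps_deg)
    done
  also have "\<dots> = eps z1 * m z2 be de"
    by (simp add: counitL)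
  finally show ?thesis .
qed

lemma G4: "mulc (HA_mult deg m mu) (e_low eps ga) (e_up u al) (z1, z2)
   = (\<Sum>ee\<in>UNIV. (-1)^(deg ga * deg al + deg z1 * deg ee + deg ee) * m al z1 ee * mu ga ee z2)"
  unfolding eL_R1 eU_R1 apply (simp add: GA[OF homog_eps homog_dl homog_dl] u_mu counitL unitL unitR eps_m)
  apply (simp add: mult_ac)
  done

lemma GAs:
  assumes h: "homog deg d g2"
  shows "mulc (HAs_mult deg m mu) (\<lambda>p. f1 (fst p) * f2 (snd p)) (\<lambda>p. g1 (fst p) * g2 (snd p)) (\<sigma>, \<tau>)
   = (\<Sum>rr\<in>UNIV. \<Sum>ee\<in>UNIV. \<Sum>pp\<in>UNIV. (-1)^(deg rr * deg pp + deg rr * deg ee + deg pp * d) *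
        (\<Sum>al\<in>UNIV. f1 al * m \<sigma> al rr) * (\<Sum>be\<in>UNIV. f2 be * m be ee pp) *
        (\<Sum>ga\<in>UNIV. g1 ga * mu ga rr ee) * (\<Sum>de\<in>UNIV. g2 de * mu \<tau> pp de))"
proof -
  have tw: "f1 al * f2 be * g1 ga * g2 de * ((-1::complex) ^ (deg rr * deg pp + deg rr * deg ee + deg pp * deg de) * X)
     = (-1)^(deg rr * deg pp + deg rr * deg ee + deg pp * d) * (f1 al * f2 be * g1 ga * g2 de * X)" for al be ga de pp ee rr X
  proof (cases "g2 de = 0")
    case True then show ?thesis by auto
  next
    case False
    then have e: "even (deg de + d)" using h unfolding homog_def by auto
    have "(-1::complex) ^ (deg pp * deg de) = (-1)^(deg pp * d)" using e by (intro sgn_cong) auto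
    then show ?thesis by (simp add: power_add)
  qed
  have "mulc (HAs_mult deg m mu) (\<lambda>p. f1 (fst p) * f2 (snd p)) (\<lambda>p. g1 (fst p) * g2 (snd p)) (\<sigma>, \<tau>)
    = (\<Sum>al\<in>UNIV. \<Sum>be\<in>UNIV. \<Sum>ga\<in>UNIV. \<Sum>de\<in>UNIV. \<Sum>rr\<in>UNIV. \<Sum>ee\<in>UNIV. \<Sum>pp\<in>UNIV.
        (-1)^(deg rr * deg pp + deg rr * deg ee + deg pp * d) *
        (f1 al * m \<sigma> al rr * f2 be * m be ee pp * g1 ga * mu ga rr ee * g2 de * mu \<tau> pp de))"
    unfolding mulc_def HAs_mult_def
    apply (simp add: sum_UNIV_pair sum_distrib_left)
    apply (intro sum.cong refl)
    subgoal for al be ga de rr ee pp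
      using tw[of al be ga de rr pp ee "mu ga rr ee * mu \<tau> pp de * m be ee pp * m \<sigma> al rr"]
      by (simp add: mult_ac)
    done
  also have "\<dots> = (\<Sum>rr\<in>UNIV. \<Sum>ee\<in>UNIV. \<Sum>pp\<in>UNIV. \<Sum>al\<in>UNIV. \<Sum>be\<in>UNIV. \<Sum>ga\<in>UNIV. \<Sum>de\<in>UNIV.
        (-1)^(deg rr * deg pp + deg rr * deg ee + deg pp * d) *
        (f1 al * m \<sigma> al rr * f2 be * m be ee pp * g1 ga * mu ga rr ee * g2 de * mu \<tau> pp de))"
    by (rule reorder7)
  also have "\<dots> = (\<Sum>rr\<in>UNIV. \<Sum>ee\<in>UNIV. \<Sum>pp\<in>UNIV. \<Sum>al\<in>UNIV. \<Sum>be\<in>UNIV. \<Sum>ga\<in>UNIV. \<Sum>de\<in>UNIV.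
        (-1)^(deg rr * deg pp + deg rr * deg ee + deg pp * d) *
        ((f1 al * m \<sigma> al rr) * (f2 be * m be ee pp) * (g1 ga * mu ga rr ee) * (g2 de * mu \<tau> pp de)))"
    by (simp add: mult.assoc)
  also have "\<dots> = (\<Sum>rr\<in>UNIV. \<Sum>ee\<in>UNIV. \<Sum>pp\<in>UNIV. (-1)^(deg rr * deg pp + deg rr * deg ee + deg pp * d) *
        (\<Sum>al\<in>UNIV. f1 al * m \<sigma> al rr) * (\<Sum>be\<in>UNIV. f2 be * m be ee pp) *
        (\<Sum>ga\<in>UNIV. g1 ga * mu ga rr ee) * (\<Sum>de\<in>UNIV. g2 de * mu \<tau> pp de))"
    by (simp only: fact4)
  finally show ?thesis .
qed

lemma tL_R1: "et_low eps al = (\<lambda>p. dl al (fst p) * eps (snd p))" by (simp add: et_low_def dl_def fun_eq_iff)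
lemma tU_R1: "et_up u al = (\<lambda>p. u (fst p) * dl al (snd p))" by (simp add: et_up_def dl_def fun_eq_iff)

lemma unitAs_L: "mulc (HAs_mult deg m mu) (oneHAs u eps) f = f"
proof (rule mulc_unitL)
  fix y z :: "'i \<times> 'i"
  obtain y1 y2 where y: "y = (y1, y2)" by (cases y)
  obtain z1 z2 where z: "z = (z1, z2)" by (cases z)
  have "(\<Sum>x\<in>UNIV. oneHAs u eps x * HAs_mult deg m mu x y z) = mulc (HAs_mult deg m mu) (\<lambda>p. u (fst p) * eps (snd p)) (\<lambda>w. dl y1 (fst w) * dl y2 (snd w)) (z1, z2)"
    using mulc_basisL[of "HAs_mult deg m mu" "\<lambda>p. u (fst p) * eps (snd p)" "(y1,y2)" "(z1,z2)"]
    by (simp add: oneHAs_def z y)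
  also have "\<dots> = (\<Sum>ee\<in>UNIV. \<Sum>pp\<in>UNIV. (-1)^(deg z1 * deg pp + deg z1 * deg ee + deg pp * deg y2) * (eps ee * eps pp) * mu y1 z1 ee * mu z2 pp y2)"
    by (simp add: GAs[OF homog_dl] u_mu counitL counitR unitL unitR eps_m)
  also have "\<dots> = (\<Sum>ee\<in>UNIV. \<Sum>pp\<in>UNIV. (eps ee * mu y1 z1 ee) * (eps pp * mu z2 pp y2))"
    apply (intro sum.cong refl)
    subgoal for ee pp by (cases "eps pp = 0"; cases "eps ee = 0") (auto simp: eps_deg)
    done
  also have "\<dots> = (if y = z then 1 else 0)"
    by (simp add: fact2b counitL counitR y z)
  finally show "(\<Sum>x\<in>UNIV. oneHAs u eps x * HAs_mult deg m mu x y z) = (if y = z then 1 else 0)" .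
qed

lemma unitAs_R: "mulc (HAs_mult deg m mu) f (oneHAs u eps) = f"
proof (rule mulc_unitR)
  fix x z :: "'i \<times> 'i"
  obtain x1 x2 where x: "x = (x1, x2)" by (cases x)
  obtain z1 z2 where z: "z = (z1, z2)" by (cases z)
  have "(\<Sum>y\<in>UNIV. oneHAs u eps y * HAs_mult deg m mu x y z) = mulc (HAs_mult deg m mu) (\<lambda>w. dl x1 (fst w) * dl x2 (snd w)) (\<lambda>p. u (fst p) * eps (snd p)) (z1, z2)"
    using mulc_basisR[of "HAs_mult deg m mu" "(x1,x2)" "\<lambda>p. u (fst p) * eps (snd p)" "(z1,z2)"]
    by (simp add: oneHAs_def z x)
  also have "\<dots> = (\<Sum>rr\<in>UNIV. \<Sum>ee\<in>UNIV. (-1)^(deg rr * deg z2 + deg rr * deg ee) * m z1 x1 rr * m x2 ee z2 * (u rr * u ee))"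
    by (simp add: GAs[OF homog_eps] u_mu counitL counitR unitL unitR eps_m)
  also have "\<dots> = (\<Sum>rr\<in>UNIV. \<Sum>ee\<in>UNIV. (u rr * m z1 x1 rr) * (u ee * m x2 ee z2))"
    apply (intro sum.cong refl)
    subgoal for rr ee by (cases "u rr = 0") (auto simp: u_deg)
    done
  also have "\<dots> = (if x = z then 1 else 0)"
    by (simp add: fact2b unitL unitR x z)
  finally show "(\<Sum>y\<in>UNIV. oneHAs u eps y * HAs_mult deg m mu x y z) = (if x = z then 1 else 0)" .
qed

lemma Q1: "mulc (HAs_mult deg m mu) (et_low eps al) (et_up u de) (z1, z2) = (if z1 = al then 1 else 0) * (if z2 = de then 1 else 0)"
proof -
  have "mulc (HAs_mult deg m mu) (et_low eps al) (et_up u de) (z1, z2)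
     = (\<Sum>rr\<in>UNIV. \<Sum>ee\<in>UNIV. \<Sum>pp\<in>UNIV. (-1)^(deg rr * deg pp + deg rr * deg ee + deg pp * deg de) * m z1 al rr * (eps ee * eps pp) * (u rr * u ee) * mu z2 pp de)"
    unfolding tL_R1 tU_R1 by (simp add: GAs[OF homog_dl] u_mu counitL counitR unitL unitR eps_m)
  also have "\<dots> = (\<Sum>rr\<in>UNIV. \<Sum>ee\<in>UNIV. \<Sum>pp\<in>UNIV. (u rr * m z1 al rr) * (u ee * eps ee) * (eps pp * mu z2 pp de))"
    apply (intro sum.cong refl)
    subgoal for rr ee pp by (cases "eps pp = 0"; cases "u rr = 0") (auto simp: eps_deg u_deg)
    done
  also have "\<dots> = (if z1 = al then 1 else 0) * (if z2 = de then 1 else 0)"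
    by (simp add: fact3b counitL unitR u_eps)
  finally show ?thesis .
qed

lemma Q2: "mulc (HAs_mult deg m mu) (et_low eps al) (et_low eps ga) (z1, z2) = m z1 al ga * eps z2"
proof -
  have "mulc (HAs_mult deg m mu) (et_low eps al) (et_low eps ga) (z1, z2)
     = (\<Sum>rr\<in>UNIV. \<Sum>ee\<in>UNIV. (-1)^(deg rr * deg z2 + deg rr * deg ee) * m z1 al rr * (eps ee * eps z2) * mu ga rr ee)"
    unfolding tL_R1 by (simp add: GAs[OF homog_eps] u_mu counitL counitR unitL unitR eps_m)
  also have "\<dots> = (\<Sum>rr\<in>UNIV. m z1 al rr * eps z2 * (\<Sum>ee\<in>UNIV. eps ee * mu ga rr ee))"
    unfolding sum_distrib_left
    apply (intro sum.cong refl)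
    subgoal for rr ee by (cases "eps ee = 0"; cases "eps z2 = 0") (auto simp: eps_deg)
    done
  also have "\<dots> = m z1 al ga * eps z2"
    by (simp add: counitR)
  finally show ?thesis .
qed

lemma Q3: "mulc (HAs_mult deg m mu) (et_up u be) (et_up u de) (z1, z2) = (-1)^(deg be * deg de) * u z1 * mu z2 be de"
proof -
  have "mulc (HAs_mult deg m mu) (et_up u be) (et_up u de) (z1, z2)
     = (\<Sum>ee\<in>UNIV. \<Sum>pp\<in>UNIV. (-1)^(deg z1 * deg pp + deg z1 * deg ee + deg pp * deg de) * m be ee pp * (u z1 * u ee) * mu z2 pp de)"
    unfolding tU_R1 by (simp add: GAs[OF homog_dl] u_mu counitL counitR unitL unitR eps_m)
  also have "\<dots> = (\<Sum>pp\<in>UNIV. (-1)^(deg pp * deg de) * u z1 * mu z2 pp de * (\<Sum>ee\<in>UNIV. u ee * m be ee pp))"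
    apply (subst sum.swap)
    unfolding sum_distrib_left
    apply (intro sum.cong refl)
    subgoal for pp ee by (cases "u z1 = 0") (auto simp: u_deg)
    done
  also have "\<dots> = (-1)^(deg be * deg de) * u z1 * mu z2 be de"
    by (simp add: unitL)
  finally show ?thesis .
qed

lemma Q4: "mulc (HAs_mult deg m mu) (et_up u be) (et_low eps ga) (z1, z2)
   = (\<Sum>ee\<in>UNIV. (-1)^(deg z1 * deg z2 + deg z1 * deg ee) * mu ga z1 ee * m be ee z2)"
  unfolding tL_R1 tU_R1 apply (simp add: GAs[OF homog_eps] u_mu counitL counitR unitL unitR eps_m)
  apply (simp add: mult_ac)
  done

lemma sum3_nz: "(\<Sum>x\<in>A. \<Sum>y\<in>B. \<Sum>z\<in>C. (f x y z::complex)) \<noteq> 0 \<Longrightarrow> \<exists>x y z. f x y z \<noteq> 0"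
  by (meson sum.not_neutral_contains_not_neutral)

lemma m_even: "m c a b \<noteq> 0 \<Longrightarrow> even (deg c + deg a + deg b)"
  using m_deg[of c a b] by presburger
lemma mu_even: "mu a b c \<noteq> 0 \<Longrightarrow> even (deg a + deg b + deg c)"
  using mu_deg[of a b c] by presburger

lemma deg01: "deg x = 0 \<or> deg x = 1" using deg_lt2[of x] by auto
lemma m_ev: "m c a b \<noteq> 0 \<longrightarrow> even (deg c + deg a + deg b)" using m_even by blast
lemma mu_ev: "mu a b c \<noteq> 0 \<longrightarrow> even (deg a + deg b + deg c)" using mu_even by blast

lemma m_nz: "m c a b \<noteq> 0 \<Longrightarrow> deg c = (deg a + deg b) mod 2"
  using m_deg[of c a b] deg_lt2[of c] by simp
lemma mu_nz: "mu a b c \<noteq> 0 \<Longrightarrow> deg a = (deg b + deg c) mod 2"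
  using mu_deg[of a b c] deg_lt2[of a] by simp

lemma graded_HA: "graded (hdeg deg) (HA_mult deg m mu)"
  unfolding graded_def
proof (intro allI impI)
  fix x y z :: "'i \<times> 'i"
  obtain al be where x: "x = (al, be)" by (cases x)
  obtain ga de where y: "y = (ga, de)" by (cases y)
  obtain si ta where z: "z = (si, ta)" by (cases z)
  assume "HA_mult deg m mu x y z \<noteq> 0"
  then obtain pp ee rr where "(-1::complex) ^ (deg be * deg ga + deg pp * deg ee + deg pp * deg al + deg ee)
         * m ga pp ee * m ta rr de * mu be ee rr * mu si al pp \<noteq> 0"
    unfolding HA_mult_def x y z by (auto dest!: sum3_nz)
  then have "m ga pp ee \<noteq> 0" "m ta rr de \<noteq> 0" "mu be ee rr \<noteq> 0" "mu si al pp \<noteq> 0" by auto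
  then have e: "even (deg ga + deg pp + deg ee)" "even (deg ta + deg rr + deg de)"
    "even (deg be + deg ee + deg rr)" "even (deg si + deg al + deg pp)"
    by (auto dest: m_even mu_even)
  have "even ((deg ga + deg pp + deg ee) + (deg ta + deg rr + deg de) + (deg be + deg ee + deg rr) + (deg si + deg al + deg pp))"
    using e by simp
  moreover have "(deg ga + deg pp + deg ee) + (deg ta + deg rr + deg de) + (deg be + deg ee + deg rr) + (deg si + deg al + deg pp)
     = (deg si + deg ta + (deg al + deg be) + (deg ga + deg de)) + 2 * (deg pp + deg ee + deg rr)" by simp
  ultimately show "even (hdeg deg z + hdeg deg x + hdeg deg y)" unfolding hdeg_def x y z by simp
qed

lemma graded_HAs: "graded (hdeg deg) (HAs_mult deg m mu)"
  unfolding graded_def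
proof (intro allI impI)
  fix x y z :: "'i \<times> 'i"
  obtain al be where x: "x = (al, be)" by (cases x)
  obtain ga de where y: "y = (ga, de)" by (cases y)
  obtain si ta where z: "z = (si, ta)" by (cases z)
  assume "HAs_mult deg m mu x y z \<noteq> 0"
  then obtain rr ee pp where "(-1::complex) ^ (deg rr * deg pp + deg rr * deg ee + deg pp * deg de)
         * mu ga rr ee * mu ta pp de * m be ee pp * m si al rr \<noteq> 0"
    unfolding HAs_mult_def x y z by (auto dest!: sum3_nz)
  then have "mu ga rr ee \<noteq> 0" "mu ta pp de \<noteq> 0" "m be ee pp \<noteq> 0" "m si al rr \<noteq> 0" by auto
  then have e: "even (deg ga + deg rr + deg ee)" "even (deg ta + deg pp + deg de)"
    "even (deg be + deg ee + deg pp)" "even (deg si + deg al + deg rr)"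
    by (auto dest: m_even mu_even)
  have "even ((deg ga + deg rr + deg ee) + (deg ta + deg pp + deg de) + (deg be + deg ee + deg pp) + (deg si + deg al + deg rr))"
    using e by simp
  moreover have "(deg ga + deg rr + deg ee) + (deg ta + deg pp + deg de) + (deg be + deg ee + deg pp) + (deg si + deg al + deg rr)
     = (deg si + deg ta + (deg al + deg be) + (deg ga + deg de)) + 2 * (deg pp + deg ee + deg rr)" by simp
  ultimately show "even (hdeg deg z + hdeg deg x + hdeg deg y)" unfolding hdeg_def x y z by simp
qed

lemma homog_eU: "homog (hdeg deg) (deg al) (e_up u al)"
  by (auto simp: homog_def e_up_def hdeg_def dest: u_deg)
lemma homog_eL: "homog (hdeg deg) (deg al) (e_low eps al)"
  by (auto simp: homog_def e_low_def hdeg_def dest: eps_deg)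
lemma homog_tL: "homog (hdeg deg) (deg al) (et_low eps al)"
  by (auto simp: homog_def et_low_def hdeg_def dest: eps_deg)
lemma homog_tU: "homog (hdeg deg) (deg al) (et_up u al)"
  by (auto simp: homog_def et_up_def hdeg_def dest: u_deg)
lemma homog_oA: "homog (hdeg deg) 0 (oneHA u eps)"
  by (auto simp: homog_def oneHA_def hdeg_def dest: u_deg eps_deg)
lemma homog_oAs: "homog (hdeg deg) 0 (oneHAs u eps)"
  by (auto simp: homog_def oneHAs_def hdeg_def dest: u_deg eps_deg)

lemmas homogs = homog_eU homog_eL homog_tL homog_tU homog_oA homog_oAs
  homog_mulc[OF graded_HA] homog_mulc[OF graded_HAs]
lemmas units = unitA_L unitA_R unitAs_L unitAs_R
lemmas lin3 = prod3_sumL prod3_sumR prod3_scaleL prod3_scaleR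

lemma id1:
  fixes c :: nat
  shows "prod3 (hdeg deg) (hdeg deg) (hdeg deg) (HAs_mult deg m mu) (HA_mult deg m mu) (HA_mult deg m mu)
      (prod3 (hdeg deg) (hdeg deg) (hdeg deg) (HAs_mult deg m mu) (HA_mult deg m mu) (HA_mult deg m mu)
         (leg12 (oneHA u eps) (S1_el deg u eps a b')) (leg13 (oneHA u eps) (S1_el deg u eps a b')))
      (leg23 (oneHAs u eps) (S_el deg u eps))
   = prod3 (hdeg deg) (hdeg deg) (hdeg deg) (HAs_mult deg m mu) (HA_mult deg m mu) (HA_mult deg m mu)
      (leg23 (oneHAs u eps) (S_el deg u eps)) (leg12 (oneHA u eps) (S1_el deg u eps a b'))"
proof -
  have L12: "leg12 (oneHA u eps) (S1_el deg u eps a b') = (\<lambda>z. \<Sum>al\<in>UNIV. (-1)^((a+b'+1) * deg al) * HT3 (deg al) (et_low eps al) (deg al) (e_up u al) 0 (oneHA u eps) z)"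
    by (rule leg12_sum) (simp add: S1_el_def)
  have L13: "leg13 (oneHA u eps) (S1_el deg u eps a b') = (\<lambda>z. \<Sum>al\<in>UNIV. (-1)^((a+b'+1) * deg al) * HT3 (deg al) (et_low eps al) 0 (oneHA u eps) (deg al) (e_up u al) z)"
    by (rule leg13_sum) (simp add: S1_el_def)
  have L23: "leg23 (oneHAs u eps) (S_el deg u eps) = (\<lambda>z. \<Sum>al\<in>UNIV. (-1)^(deg al) * HT3 0 (oneHAs u eps) (deg al) (e_low eps al) (deg al) (e_up u al) z)"
    by (rule leg23_sum) (simp add: S_el_def)
  show ?thesis
    unfolding L12 L13 L23
    apply (simp add: lin3 prod3_HT3 homogs units)
    apply (simp add: fun_eq_iff HT3_def G1 G2 G3 G4 Q1 Q2 Q3 Q4)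
    apply (simp add: e_up_def e_low_def et_low_def et_up_def)
    apply (intro allI)
    apply (simp only: sum_distrib_left sum_distrib_right)
    apply (rule sum.cong[OF refl])
    subgoal for s1 t1 s2 t2 s3 t3 x
      apply (cases "m s1 s2 x = 0 \<or> mu s3 x t2 = 0")
      apply auto[1]
      using deg01[of s2] deg01[of t2] deg01[of x] m_nz[of s1 s2 x] mu_nz[of s3 x t2]
      by (cases "even (a+b')"; elim disjE; simp)
    done
qed

lemma id2:
  shows "(prod3 (hdeg deg) (hdeg deg) (hdeg deg) (HAs_mult deg m mu) (HAs_mult deg m mu) (HA_mult deg m mu) (leg12 (oneHA u eps) (St_el u eps)) (leg23 (oneHAs u eps) (S1_el deg u eps a b')))
   = (prod3 (hdeg deg) (hdeg deg) (hdeg deg) (HAs_mult deg m mu) (HAs_mult deg m mu) (HA_mult deg m mu) (prod3 (hdeg deg) (hdeg deg) (hdeg deg) (HAs_mult deg m mu) (HAs_mult deg m mu) (HA_mult deg m mu) (leg23 (oneHAs u eps) (S1_el deg u eps a b')) (leg13 (oneHAs u eps) (S1_el deg u eps a b'))) (leg12 (oneHA u eps) (St_el u eps)))"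
proof -
  have L0: "(leg12 (oneHA u eps) (St_el u eps)) = (\<lambda>z. \<Sum>al\<in>UNIV. 1 * HT3 (deg al) (et_low eps al) (deg al) (et_up u al) 0 (oneHA u eps) z)"
    by (rule leg12_sum) (simp add: St_el_def)
  have L1: "(leg23 (oneHAs u eps) (S1_el deg u eps a b')) = (\<lambda>z. \<Sum>al\<in>UNIV. (-1)^((a+b'+1) * deg al) * HT3 0 (oneHAs u eps) (deg al) (et_low eps al) (deg al) (e_up u al) z)"
    by (rule leg23_sum) (simp add: S1_el_def)
  have L2: "(leg13 (oneHAs u eps) (S1_el deg u eps a b')) = (\<lambda>z. \<Sum>al\<in>UNIV. (-1)^((a+b'+1) * deg al) * HT3 (deg al) (et_low eps al) 0 (oneHAs u eps) (deg al) (e_up u al) z)"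
    by (rule leg13_sum) (simp add: S1_el_def)
  show ?thesis
    unfolding L0 L1 L2
    apply (simp add: lin3 prod3_HT3 homogs units)
    apply (simp add: fun_eq_iff HT3_def G1 G2 G3 G4 Q1 Q2 Q3 Q4)
    apply (simp add: e_up_def e_low_def et_low_def et_up_def)
    apply (intro allI)
    apply (simp only: sum_distrib_left sum_distrib_right)
    apply (rule sum.cong[OF refl])
    subgoal for s1 t1 s2 t2 s3 t3 x
      apply (cases "m s1 x t2 = 0 \<or> mu s3 s2 x = 0 \<or> eps t1 = 0 \<or> u t3 = 0")
      apply auto[1]
      using deg01[of s2] deg01[of t2] deg01[of x] m_nz[of s1 x t2] mu_nz[of s3 s2 x] eps_deg[of t1] u_deg[of t3]
      by (cases "even (a+b')"; elim disjE; simp)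
    done
qed

lemma id3:
  shows "(prod3 (hdeg deg) (hdeg deg) (hdeg deg) (HA_mult deg m mu) (HA_mult deg m mu) (HAs_mult deg m mu) (prod3 (hdeg deg) (hdeg deg) (hdeg deg) (HA_mult deg m mu) (HA_mult deg m mu) (HAs_mult deg m mu) (leg12 (oneHAs u eps) (S_el deg u eps)) (leg13 (oneHA u eps) (S2_el deg u eps a b'))) (leg23 (oneHA u eps) (S2_el deg u eps a b')))
   = (prod3 (hdeg deg) (hdeg deg) (hdeg deg) (HA_mult deg m mu) (HA_mult deg m mu) (HAs_mult deg m mu) (leg23 (oneHA u eps) (S2_el deg u eps a b')) (leg12 (oneHAs u eps) (S_el deg u eps)))"
proof -
  have L0: "(leg12 (oneHAs u eps) (S_el deg u eps)) = (\<lambda>z. \<Sum>al\<in>UNIV. (-1)^(deg al) * HT3 (deg al) (e_low eps al) (deg al) (e_up u al) 0 (oneHAs u eps) z)"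
    by (rule leg12_sum) (simp add: S_el_def)
  have L1: "(leg13 (oneHA u eps) (S2_el deg u eps a b')) = (\<lambda>z. \<Sum>al\<in>UNIV. (-1)^((a+b') * deg al) * HT3 (deg al) (e_low eps al) 0 (oneHA u eps) (deg al) (et_up u al) z)"
    by (rule leg13_sum) (simp add: S2_el_def)
  have L2: "(leg23 (oneHA u eps) (S2_el deg u eps a b')) = (\<lambda>z. \<Sum>al\<in>UNIV. (-1)^((a+b') * deg al) * HT3 0 (oneHA u eps) (deg al) (e_low eps al) (deg al) (et_up u al) z)"
    by (rule leg23_sum) (simp add: S2_el_def)
  show ?thesis
    unfolding L0 L1 L2
    apply (simp add: lin3 prod3_HT3 homogs units)
    apply (simp add: fun_eq_iff HT3_def G1 G2 G3 G4 Q1 Q2 Q3 Q4)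
    apply (simp add: e_up_def e_low_def et_low_def et_up_def)
    apply (intro allI)
    apply (simp only: sum_distrib_left sum_distrib_right)
    apply (rule sum.cong[OF refl])
    subgoal for s1 t1 s2 t2 s3 t3 x
      apply (cases "m t1 s2 x = 0 \<or> mu t3 x t2 = 0 \<or> eps s1 = 0 \<or> u s3 = 0")
      apply auto[1]
      using deg01[of s2] deg01[of t2] deg01[of x] m_nz[of t1 s2 x] mu_nz[of t3 x t2] eps_deg[of s1] u_deg[of s3]
      by (cases "even (a+b')"; elim disjE; simp)
    done
qed

lemma id4:
  shows "(prod3 (hdeg deg) (hdeg deg) (hdeg deg) (HA_mult deg m mu) (HAs_mult deg m mu) (HAs_mult deg m mu) (leg12 (oneHAs u eps) (S2_el deg u eps a b')) (leg23 (oneHA u eps) (St_el u eps)))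
   = (prod3 (hdeg deg) (hdeg deg) (hdeg deg) (HA_mult deg m mu) (HAs_mult deg m mu) (HAs_mult deg m mu) (prod3 (hdeg deg) (hdeg deg) (hdeg deg) (HA_mult deg m mu) (HAs_mult deg m mu) (HAs_mult deg m mu) (leg23 (oneHA u eps) (St_el u eps)) (leg13 (oneHAs u eps) (S2_el deg u eps a b'))) (leg12 (oneHAs u eps) (S2_el deg u eps a b')))"
proof -
  have L0: "(leg12 (oneHAs u eps) (S2_el deg u eps a b')) = (\<lambda>z. \<Sum>al\<in>UNIV. (-1)^((a+b') * deg al) * HT3 (deg al) (e_low eps al) (deg al) (et_up u al) 0 (oneHAs u eps) z)"
    by (rule leg12_sum) (simp add: S2_el_def)
  have L1: "(leg23 (oneHA u eps) (St_el u eps)) = (\<lambda>z. \<Sum>al\<in>UNIV. 1 * HT3 0 (oneHA u eps) (deg al) (et_low eps al) (deg al) (et_up u al) z)"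
    by (rule leg23_sum) (simp add: St_el_def)
  have L2: "(leg13 (oneHAs u eps) (S2_el deg u eps a b')) = (\<lambda>z. \<Sum>al\<in>UNIV. (-1)^((a+b') * deg al) * HT3 (deg al) (e_low eps al) 0 (oneHAs u eps) (deg al) (et_up u al) z)"
    by (rule leg13_sum) (simp add: S2_el_def)
  show ?thesis
    unfolding L0 L1 L2
    apply (simp add: lin3 prod3_HT3 homogs units)
    apply (simp add: fun_eq_iff HT3_def G1 G2 G3 G4 Q1 Q2 Q3 Q4)
    apply (simp add: e_up_def e_low_def et_low_def et_up_def)
    apply (intro allI)
    apply (simp only: sum_distrib_left sum_distrib_right)
    apply (rule sum.cong[OF refl])
    subgoal for s1 t1 s2 t2 s3 t3 x
      apply (cases "m t1 x t2 = 0 \<or> mu t3 s2 x = 0 \<or> eps s1 = 0 \<or> u s3 = 0")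
      apply auto[1]
      using deg01[of s2] deg01[of t2] deg01[of x] m_nz[of t1 x t2] mu_nz[of t3 s2 x] eps_deg[of s1] u_deg[of s3]
      by (cases "even (a+b')"; elim disjE; simp)
    done
qed

lemma id5:
  shows "(prod3 (hdeg deg) (hdeg deg) (hdeg deg) (HAs_mult deg m mu) (HA_mult deg m mu) (HAs_mult deg m mu) (prod3 (hdeg deg) (hdeg deg) (hdeg deg) (HAs_mult deg m mu) (HA_mult deg m mu) (HAs_mult deg m mu) (leg12 (oneHAs u eps) (S1_el deg u eps a b')) (leg13 (oneHA u eps) (St_el u eps))) (leg23 (oneHAs u eps) (S2_el deg u eps a b')))
   = (prod3 (hdeg deg) (hdeg deg) (hdeg deg) (HAs_mult deg m mu) (HA_mult deg m mu) (HAs_mult deg m mu) (leg23 (oneHAs u eps) (S2_el deg u eps a b')) (leg12 (oneHAs u eps) (S1_el deg u eps a b')))"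
proof -
  have L0: "(leg12 (oneHAs u eps) (S1_el deg u eps a b')) = (\<lambda>z. \<Sum>al\<in>UNIV. (-1)^((a+b'+1) * deg al) * HT3 (deg al) (et_low eps al) (deg al) (e_up u al) 0 (oneHAs u eps) z)"
    by (rule leg12_sum) (simp add: S1_el_def)
  have L1: "(leg13 (oneHA u eps) (St_el u eps)) = (\<lambda>z. \<Sum>al\<in>UNIV. 1 * HT3 (deg al) (et_low eps al) 0 (oneHA u eps) (deg al) (et_up u al) z)"
    by (rule leg13_sum) (simp add: St_el_def)
  have L2: "(leg23 (oneHAs u eps) (S2_el deg u eps a b')) = (\<lambda>z. \<Sum>al\<in>UNIV. (-1)^((a+b') * deg al) * HT3 0 (oneHAs u eps) (deg al) (e_low eps al) (deg al) (et_up u al) z)"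
    by (rule leg23_sum) (simp add: S2_el_def)
  show ?thesis
    unfolding L0 L1 L2
    apply (simp add: lin3 prod3_HT3 homogs units)
    apply (simp add: fun_eq_iff HT3_def G1 G2 G3 G4 Q1 Q2 Q3 Q4)
    apply (simp add: e_up_def e_low_def et_low_def et_up_def)
    apply (intro allI)
    apply (simp only: sum_distrib_left sum_distrib_right)
    apply (rule sum.cong[OF refl])
    subgoal for s1 t1 s2 t2 s3 t3 x
      apply (cases "m s1 s2 x = 0 \<or> mu t3 x t2 = 0 \<or> eps t1 = 0 \<or> u s3 = 0")
      apply auto[1]
      using deg01[of s2] deg01[of t2] deg01[of x] m_nz[of s1 s2 x] mu_nz[of t3 x t2] eps_deg[of t1] u_deg[of s3]
      by (cases "even (a+b')"; elim disjE; simp)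
    done
qed

lemma id6:
  shows "(prod3 (hdeg deg) (hdeg deg) (hdeg deg) (HA_mult deg m mu) (HAs_mult deg m mu) (HA_mult deg m mu) (leg12 (oneHA u eps) (S2_el deg u eps a b')) (leg23 (oneHA u eps) (S1_el deg u eps a b')))
   = (prod3 (hdeg deg) (hdeg deg) (hdeg deg) (HA_mult deg m mu) (HAs_mult deg m mu) (HA_mult deg m mu) (prod3 (hdeg deg) (hdeg deg) (hdeg deg) (HA_mult deg m mu) (HAs_mult deg m mu) (HA_mult deg m mu) (leg23 (oneHA u eps) (S1_el deg u eps a b')) (leg13 (oneHAs u eps) (S_el deg u eps))) (leg12 (oneHA u eps) (S2_el deg u eps a b')))"
proof -
  have L0: "(leg12 (oneHA u eps) (S2_el deg u eps a b')) = (\<lambda>z. \<Sum>al\<in>UNIV. (-1)^((a+b') * deg al) * HT3 (deg al) (e_low eps al) (deg al) (et_up u al) 0 (oneHA u eps) z)"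
    by (rule leg12_sum) (simp add: S2_el_def)
  have L1: "(leg23 (oneHA u eps) (S1_el deg u eps a b')) = (\<lambda>z. \<Sum>al\<in>UNIV. (-1)^((a+b'+1) * deg al) * HT3 0 (oneHA u eps) (deg al) (et_low eps al) (deg al) (e_up u al) z)"
    by (rule leg23_sum) (simp add: S1_el_def)
  have L2: "(leg13 (oneHAs u eps) (S_el deg u eps)) = (\<lambda>z. \<Sum>al\<in>UNIV. (-1)^(deg al) * HT3 (deg al) (e_low eps al) 0 (oneHAs u eps) (deg al) (e_up u al) z)"
    by (rule leg13_sum) (simp add: S_el_def)
  show ?thesis
    unfolding L0 L1 L2
    apply (simp add: lin3 prod3_HT3 homogs units)
    apply (simp add: fun_eq_iff HT3_def G1 G2 G3 G4 Q1 Q2 Q3 Q4)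
    apply (simp add: e_up_def e_low_def et_low_def et_up_def)
    apply (intro allI)
    apply (simp only: sum_distrib_left sum_distrib_right)
    apply (rule sum.cong[OF refl])
    subgoal for s1 t1 s2 t2 s3 t3 x
      apply (cases "m t1 x t2 = 0 \<or> mu s3 s2 x = 0 \<or> eps s1 = 0 \<or> u t3 = 0")
      apply auto[1]
      using deg01[of s2] deg01[of t2] deg01[of x] m_nz[of t1 x t2] mu_nz[of s3 s2 x] eps_deg[of s1] u_deg[of t3]
      by (cases "even (a+b')"; elim disjE; simp)
    done
qed

lemma id7:
  shows "(prod3 (hdeg deg) (hdeg deg) (hdeg deg) (HAs_mult deg m mu) (HAs_mult deg m mu) (HAs_mult deg m mu) (leg12 (oneHAs u eps) (St_el u eps)) (leg23 (oneHAs u eps) (St_el u eps)))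
   = (prod3 (hdeg deg) (hdeg deg) (hdeg deg) (HAs_mult deg m mu) (HAs_mult deg m mu) (HAs_mult deg m mu) (prod3 (hdeg deg) (hdeg deg) (hdeg deg) (HAs_mult deg m mu) (HAs_mult deg m mu) (HAs_mult deg m mu) (leg23 (oneHAs u eps) (St_el u eps)) (leg13 (oneHAs u eps) (St_el u eps))) (leg12 (oneHAs u eps) (St_el u eps)))"
proof -
  have L0: "(leg12 (oneHAs u eps) (St_el u eps)) = (\<lambda>z. \<Sum>al\<in>UNIV. 1 * HT3 (deg al) (et_low eps al) (deg al) (et_up u al) 0 (oneHAs u eps) z)"
    by (rule leg12_sum) (simp add: St_el_def)
  have L1: "(leg23 (oneHAs u eps) (St_el u eps)) = (\<lambda>z. \<Sum>al\<in>UNIV. 1 * HT3 0 (oneHAs u eps) (deg al) (et_low eps al) (deg al) (et_up u al) z)"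
    by (rule leg23_sum) (simp add: St_el_def)
  have L2: "(leg13 (oneHAs u eps) (St_el u eps)) = (\<lambda>z. \<Sum>al\<in>UNIV. 1 * HT3 (deg al) (et_low eps al) 0 (oneHAs u eps) (deg al) (et_up u al) z)"
    by (rule leg13_sum) (simp add: St_el_def)
  show ?thesis
    unfolding L0 L1 L2
    apply (simp add: lin3 prod3_HT3 homogs units)
    apply (simp add: fun_eq_iff HT3_def G1 G2 G3 G4 Q1 Q2 Q3 Q4)
    apply (simp add: e_up_def e_low_def et_low_def et_up_def)
    apply (intro allI)
    apply (simp only: sum_distrib_left sum_distrib_right)
    apply (rule sum.cong[OF refl])
    subgoal for s1 t1 s2 t2 s3 t3 x
      apply (cases "m s1 x t2 = 0 \<or> mu t3 s2 x = 0 \<or> eps t1 = 0 \<or> u s3 = 0")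
      apply auto[1]
      using deg01[of s2] deg01[of t2] deg01[of x] m_nz[of s1 x t2] mu_nz[of t3 s2 x] eps_deg[of t1] u_deg[of s3]
      by (cases "even (a+b')"; elim disjE; simp)
    done
qed


end
theorem mainTheorem4:
  fixes deg :: "'i::finite \<Rightarrow> nat"
    and m mu :: "'i \<Rightarrow> 'i \<Rightarrow> 'i \<Rightarrow> complex"
    and u eps :: "'i \<Rightarrow> complex"
    and s :: "'i \<Rightarrow> 'i \<Rightarrow> complex"
    and a b' :: nat
  assumes hopf: "graded_hopf deg m mu u eps s"
  defines "dH \<equiv> hdeg deg"
      and "mA \<equiv> HA_mult deg m mu"
      and "mAs \<equiv> HAs_mult deg m mu"
      and "oA \<equiv> oneHA u eps"
      and "oAs \<equiv> oneHAs u eps"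
      and "S \<equiv> S_el deg u eps"
      and "St \<equiv> St_el u eps"
      and "S1 \<equiv> S1_el deg u eps a b'"
      and "S2 \<equiv> S2_el deg u eps a b'"
  shows
   "prod3 dH dH dH mAs mA mA (prod3 dH dH dH mAs mA mA (leg12 oA S1) (leg13 oA S1)) (leg23 oAs S)
      = prod3 dH dH dH mAs mA mA (leg23 oAs S) (leg12 oA S1)
  \<and> prod3 dH dH dH mAs mAs mA (leg12 oA St) (leg23 oAs S1)
      = prod3 dH dH dH mAs mAs mA (prod3 dH dH dH mAs mAs mA (leg23 oAs S1) (leg13 oAs S1)) (leg12 oA St)
  \<and> prod3 dH dH dH mA mA mAs (prod3 dH dH dH mA mA mAs (leg12 oAs S) (leg13 oA S2)) (leg23 oA S2)
      = prod3 dH dH dH mA mA mAs (leg23 oA S2) (leg12 oAs S)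
  \<and> prod3 dH dH dH mA mAs mAs (leg12 oAs S2) (leg23 oA St)
      = prod3 dH dH dH mA mAs mAs (prod3 dH dH dH mA mAs mAs (leg23 oA St) (leg13 oAs S2)) (leg12 oAs S2)
  \<and> prod3 dH dH dH mAs mA mAs (prod3 dH dH dH mAs mA mAs (leg12 oAs S1) (leg13 oA St)) (leg23 oAs S2)
      = prod3 dH dH dH mAs mA mAs (leg23 oAs S2) (leg12 oAs S1)
  \<and> prod3 dH dH dH mA mAs mA (leg12 oA S2) (leg23 oA S1)
      = prod3 dH dH dH mA mAs mA (prod3 dH dH dH mA mAs mA (leg23 oA S1) (leg13 oAs S)) (leg12 oA S2)
  \<and> prod3 dH dH dH mAs mAs mAs (leg12 oAs St) (leg23 oAs St)
      = prod3 dH dH dH mAs mAs mAs (prod3 dH dH dH mAs mAs mAs (leg23 oAs St) (leg13 oAs St)) (leg12 oAs St)"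
  proof -
  interpret ghopf deg m mu u eps s by (rule ghopf.intro[OF hopf])
  show ?thesis
    unfolding assms(2-10)
    using id1 id2 id3 id4 id5 id6 id7 by (intro conjI)
qed

end
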